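(* Let $B_0,\ldots,B_N$ be complex $d\times d$ matrices, $T(\lambda)=\sum_{i=0}^N\lambda^iB_i$, and $\mathcal{F}(\lambda)=\det T(\lambda)$. Let $e\ge0$ be the largest integer such that $\lambda^e$ divides $\mathcal{F}(\lambda)$, so $\mathcal{F}(\lambda)=\lambda^eg(\lambda)$ with $g$ a polynomial, $g(0)\ne0$. Let $\boldsymbol\lambda=(\lambda_1,\ldots,\lambda_m)$ be a stable non-resonant vector of eigenvalues none of which is zero. Then there exists a constant $C>0$ such that $$\|T(\boldsymbol\lambda^\alpha)^{-1}\|\le C\,|\boldsymbol\lambda^\alpha|^{-e}\qquad\text{for all }\alpha\in\mathbb{Z}_+^m\text{ with }|\alpha|\ge2.$$
   Context: $\|\cdot\|$ is any fixed matrix norm. $\boldsymbol\lambda^\alpha=\prod\lambda_i^{\alpha_i}$. A vector $\boldsymbol\lambda\in\mathbb{C}^m$ is a stable non-resonant vector of eigenvalues if $|\lambda_i|<1$, $\mathcal{F}(\lambda_i)=0$ for all $i$, and $\mathcal{F}(\boldsymbol\lambda^\alpha)\ne0$ for all $\alpha\in\mathbb{Z}_+^m$ with $|\alpha|\ge2$. *)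

theory Defs
  imports "HOL-Analysis.Analysis" "HOL-Computational_Algebra.Polynomial"
begin

definition Tmat :: "(nat \<Rightarrow> complex^'d^'d) \<Rightarrow> nat \<Rightarrow> complex \<Rightarrow> complex^'d^'d" where
  "Tmat B N x = (\<chi> i j. \<Sum>k\<le>N. x ^ k * (B k $ i $ j))"

definition Fdet :: "(nat \<Rightarrow> complex^'d^'d) \<Rightarrow> nat \<Rightarrow> complex \<Rightarrow> complex" where
  "Fdet B N x = det (Tmat B N x)"

definition mpow :: "nat \<Rightarrow> (nat \<Rightarrow> complex) \<Rightarrow> (nat \<Rightarrow> nat) \<Rightarrow> complex" where
  "mpow m lam \<alpha> = (\<Prod>i<m. lam i ^ \<alpha> i)"

definition mlen :: "nat \<Rightarrow> (nat \<Rightarrow> nat) \<Rightarrow> nat" where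
  "mlen m \<alpha> = (\<Sum>i<m. \<alpha> i)"

definition stable_nonresonant :: "(complex \<Rightarrow> complex) \<Rightarrow> nat \<Rightarrow> (nat \<Rightarrow> complex) \<Rightarrow> bool" where
  "stable_nonresonant F m lam \<longleftrightarrow>
     (\<forall>i<m. norm (lam i) < 1 \<and> F (lam i) = 0) \<and>
     (\<forall>\<alpha>. mlen m \<alpha> \<ge> 2 \<longrightarrow> F (mpow m lam \<alpha>) \<noteq> 0)"

end

theory Submission imports Defs begin

definition adjE :: "complex^'d^'d \<Rightarrow> 'd \<Rightarrow> 'd \<Rightarrow> complex" where
  "adjE A i j = det (\<chi> p q. if q = i then (axis j 1 :: complex^'d) $ p else A $ p $ q)"

lemma inv_entry:
  fixes A :: "complex^'d^'d"
  assumes "det A \<noteq> 0"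
  shows "matrix_inv A $ i $ j = adjE A i j / det A"
proof -
  have inv: "invertible A" using assms invertible_det_nz by blast
  have AA: "A ** matrix_inv A = mat 1"
    using inv unfolding invertible_def matrix_inv_def by (rule someI2_ex) auto
  have "A *v (matrix_inv A *v axis j 1) = axis j 1"
    by (simp add: matrix_vector_mul_assoc AA)
  then have "matrix_inv A *v axis j 1 = (\<chi> k. det(\<chi> p q. if q=k then (axis j 1 :: complex^'d)$p else A$p$q) / det A)"
    using cramer[OF assms] by blast
  then have "(matrix_inv A *v axis j 1) $ i = adjE A i j / det A"
    by (simp add: adjE_def)
  moreover have "(matrix_inv A *v axis j 1) $ i = matrix_inv A $ i $ j"
    by (simp add: matrix_vector_mult_def axis_def if_distrib cong: if_cong)
  ultimately show ?thesis by simp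
qed

lemma norm_mat_le: "norm (M :: complex^'d^'d) \<le> (\<Sum>i\<in>UNIV. \<Sum>j\<in>UNIV. norm (M $ i $ j))"
proof -
  have "norm M \<le> (\<Sum>i\<in>UNIV. norm (M $ i))"
    unfolding norm_vec_def by (rule L2_set_le_sum) simp
  also have "\<dots> \<le> (\<Sum>i\<in>UNIV. \<Sum>j\<in>UNIV. norm (M $ i $ j))"
    apply (rule sum_mono) unfolding norm_vec_def by (rule L2_set_le_sum) simp
  finally show ?thesis .
qed

lemma cont_adj: fixes B :: "nat \<Rightarrow> complex^'d^'d" and i j :: 'd shows "continuous_on UNIV (\<lambda>z. adjE (Tmat B N z) i j)"
proof -
  have "continuous_on UNIV (\<lambda>x. if q = i then (axis j 1::complex^'d) $ p
              else (Tmat B N x) $ p $ q)" for p q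
    by (cases "q = i") (auto simp: Tmat_def intro!: continuous_intros)
  then show ?thesis
  unfolding adjE_def det_def
  by (intro continuous_intros) auto
qed

theorem mainTheorem10:
  fixes B :: "nat \<Rightarrow> complex^'d^'d" and N :: nat
    and e :: nat and g :: "complex poly"
    and m :: nat and lam :: "nat \<Rightarrow> complex"
  assumes fact: "\<forall>x. Fdet B N x = x ^ e * poly g x"
    and g0: "poly g 0 \<noteq> 0"
    and snr: "stable_nonresonant (Fdet B N) m lam"
    and nz: "\<forall>i<m. lam i \<noteq> 0"
  shows "\<exists>C>0. \<forall>\<alpha>. mlen m \<alpha> \<ge> 2 \<longrightarrow>
           norm (matrix_inv (Tmat B N (mpow m lam \<alpha>))) \<le> C * norm (mpow m lam \<alpha>) powi (- int e)"
proof (cases "m = 0")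
  case True
  then show ?thesis by (intro exI[of _ 1]) (auto simp: mlen_def)
next
  case False
  define r where "r = Max ((\<lambda>i. norm (lam i)) ` {..<m})"
  have rin: "r \<in> (\<lambda>i. norm (lam i)) ` {..<m}"
    unfolding r_def using False by (intro Max_in) auto
  have r_lt: "r < 1" using rin snr unfolding stable_nonresonant_def by auto
  have r_ge: "\<forall>i<m. norm (lam i) \<le> r" unfolding r_def by auto
  have "norm (lam 0) > 0" using nz False by simp
  moreover have "norm (lam 0) \<le> r" using r_ge False by simp
  ultimately have r_pos: "r > 0" by linarith
  have zbound: "norm (mpow m lam \<alpha>) \<le> r ^ mlen m \<alpha>" for \<alpha>
  proof -
    have "norm (mpow m lam \<alpha>) = (\<Prod>i<m. norm (lam i) ^ \<alpha> i)"
      by (simp add: mpow_def prod_norm[symmetric] norm_power)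
    also have "\<dots> \<le> (\<Prod>i<m. r ^ \<alpha> i)"
      using r_ge by (intro prod_mono) (auto intro: power_mono)
    also have "\<dots> = r ^ mlen m \<alpha>" by (simp add: mlen_def power_sum)
    finally show ?thesis .
  qed
  have znz: "mpow m lam \<alpha> \<noteq> 0" for \<alpha>
    using nz by (simp add: mpow_def)
  have Fnz: "Fdet B N (mpow m lam \<alpha>) \<noteq> 0" if "mlen m \<alpha> \<ge> 2" for \<alpha>
    using snr that unfolding stable_nonresonant_def by blast
  have gnz: "poly g (mpow m lam \<alpha>) \<noteq> 0" if "mlen m \<alpha> \<ge> 2" for \<alpha>
    using Fnz[OF that] fact by auto
  have "isCont (poly g) 0" by simp
  then obtain \<delta> where dpos: "\<delta> > 0"
    and dprop: "\<forall>z. z \<noteq> 0 \<and> norm (z - 0) < \<delta> \<longrightarrow> norm (poly g z - poly g 0) < norm (poly g 0) / 2"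
    unfolding isCont_def LIM_eq using g0 by (metis half_gt_zero zero_less_norm_iff)
  have gsmall: "norm (poly g z) \<ge> norm (poly g 0) / 2" if "norm z < \<delta>" for z
  proof (cases "z = 0")
    case True then show ?thesis by simp
  next
    case False
    then have "norm (poly g z - poly g 0) < norm (poly g 0) / 2" using dprop that by simp
    then show ?thesis using norm_triangle_ineq2[of "poly g 0" "poly g z"]
      by (simp add: norm_minus_commute)
  qed
  have "(\<lambda>n. r ^ n) \<longlonglongrightarrow> 0" using r_lt r_pos by (intro LIMSEQ_power_zero) auto
  then obtain K0 where K0': "\<forall>n\<ge>K0. dist (r ^ n) 0 < \<delta>"
    using dpos unfolding lim_sequentially by blast
  have K0: "\<forall>n\<ge>K0. r ^ n < \<delta>"
  proof (intro allI impI)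
    fix n assume "n \<ge> K0"
    then have "dist (r ^ n) 0 < \<delta>" using K0' by blast
    then show "r ^ n < \<delta>" using r_pos by (simp add: dist_real_def)
  qed
  define W where "W = {mpow m lam \<alpha> | \<alpha>. 2 \<le> mlen m \<alpha> \<and> mlen m \<alpha> \<le> K0}"
  have "W \<subseteq> (\<lambda>f. \<Prod>i<m. lam i ^ f i) ` ({..<m} \<rightarrow>\<^sub>E {..K0})"
  proof
    fix w assume "w \<in> W"
    then obtain \<alpha> where w: "w = mpow m lam \<alpha>" and a: "mlen m \<alpha> \<le> K0" unfolding W_def by auto
    have "\<alpha> i \<le> K0" if "i < m" for i
      using a that member_le_sum[of i "{..<m}" \<alpha>] unfolding mlen_def by simp
    then have "restrict \<alpha> {..<m} \<in> {..<m} \<rightarrow>\<^sub>E {..K0}" by auto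
    moreover have "w = (\<Prod>i<m. lam i ^ restrict \<alpha> {..<m} i)"
      unfolding w mpow_def by (intro prod.cong) auto
    ultimately show "w \<in> (\<lambda>f. \<Prod>i<m. lam i ^ f i) ` ({..<m} \<rightarrow>\<^sub>E {..K0})" by blast
  qed
  then have finW: "finite W" by (rule finite_subset) (intro finite_imageI finite_PiE; simp)
  define c where "c = Min (insert (norm (poly g 0) / 2) ((\<lambda>w. norm (poly g w)) ` W))"
  have Wnz: "\<forall>w\<in>W. poly g w \<noteq> 0" unfolding W_def using gnz by auto
  have cpos: "c > 0" unfolding c_def using finW g0 Wnz by (subst Min_gr_iff) auto
  have glow: "norm (poly g (mpow m lam \<alpha>)) \<ge> c" if "mlen m \<alpha> \<ge> 2" for \<alpha>
  proof (cases "norm (mpow m lam \<alpha>) < \<delta>")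
    case True
    then show ?thesis using gsmall[OF True] unfolding c_def using finW
      by (meson Min_le finite_imageI finite_insert insertI1 order_trans)
  next
    case False
    then have "r ^ mlen m \<alpha> \<ge> \<delta>" using zbound[of \<alpha>] by linarith
    then have "mlen m \<alpha> \<le> K0" using K0 by (meson not_le nle_le)
    then have "mpow m lam \<alpha> \<in> W" unfolding W_def using that by auto
    then show ?thesis unfolding c_def using finW by (intro Min_le) auto
  qed
  define adjs where "adjs z = (\<Sum>i\<in>UNIV. \<Sum>j\<in>UNIV. norm (adjE (Tmat B N z) i j))" for z
  have "continuous_on UNIV adjs" unfolding adjs_def
    by (intro continuous_intros continuous_on_compose2[OF continuous_on_norm_id cont_adj]) auto
  then have "compact (adjs ` cball 0 1)"
    by (intro compact_continuous_image) (auto intro: continuous_on_subset)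
  then obtain K where K: "\<forall>x\<in>adjs ` cball 0 1. norm x \<le> K"
    using compact_imp_bounded bounded_iff by metis
  have Kb: "adjs z \<le> K" if "norm z \<le> 1" for z
  proof -
    have "adjs z \<in> adjs ` cball 0 1" using that by simp
    then have "norm (adjs z) \<le> K" using K by blast
    then show ?thesis by simp
  qed
  have "0 \<le> adjs 0" unfolding adjs_def by (intro sum_nonneg) auto
  then have K0le: "0 \<le> K" using Kb[of 0] by simp
  show ?thesis
  proof (intro exI[of _ "K / c + 1"] conjI allI impI)
    show "K / c + 1 > 0" using K0le cpos by (simp add: add_nonneg_pos)
    fix \<alpha> assume a2: "mlen m \<alpha> \<ge> 2"
    define z where "z = mpow m lam \<alpha>"
    have "r ^ mlen m \<alpha> \<le> 1" using r_lt r_pos by (intro power_le_one) auto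
    then have z1: "norm z \<le> 1" unfolding z_def using zbound[of \<alpha>] by linarith
    have zn: "z \<noteq> 0" unfolding z_def by (rule znz)
    have Fz: "det (Tmat B N z) \<noteq> 0" using Fnz[OF a2] unfolding z_def Fdet_def .
    have nF: "norm (det (Tmat B N z)) = norm z ^ e * norm (poly g z)"
      using fact unfolding Fdet_def by (simp add: norm_mult norm_power)
    have nFge: "norm (det (Tmat B N z)) \<ge> norm z ^ e * c"
      unfolding nF using glow[OF a2] unfolding z_def[symmetric] by (simp add: mult_left_mono)
    have zpe: "norm z ^ e > 0" using zn by simp
    have "norm (matrix_inv (Tmat B N z)) \<le> (\<Sum>i\<in>UNIV. \<Sum>j\<in>UNIV. norm (matrix_inv (Tmat B N z) $ i $ j))"
      by (rule norm_mat_le)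
    also have "\<dots> = adjs z / norm (det (Tmat B N z))"
      unfolding adjs_def inv_entry[OF Fz] by (simp add: norm_divide sum_divide_distrib)
    also have "\<dots> \<le> K / norm (det (Tmat B N z))"
      using Kb[OF z1] by (simp add: divide_right_mono)
    also have "\<dots> \<le> K / (norm z ^ e * c)"
    proof -
      have p: "0 < norm z ^ e * c" using zpe cpos by simp
      moreover have "0 < norm (det (Tmat B N z))" using p nFge by linarith
      ultimately have "0 < norm (det (Tmat B N z)) * (norm z ^ e * c)"
        by (simp only: mult_pos_pos)
      then show ?thesis using nFge K0le by (intro divide_left_mono) auto
    qed
    also have "\<dots> = (K / c) * norm z powi (- int e)"
      by (simp add: power_int_minus field_simps)
    also have "\<dots> \<le> (K / c + 1) * norm z powi (- int e)"
      using zn by (intro mult_right_mono) auto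
    finally show "norm (matrix_inv (Tmat B N (mpow m lam \<alpha>))) \<le> (K / c + 1) * norm (mpow m lam \<alpha>) powi (- int e)"
      unfolding z_def .
  qed
qed

end
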